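(* Let $k,\ell \geq 0$ be integers and let $F$ be a field of characteristic zero. For $n \ge 0$ let $H_n(k,\ell)$ be the set of partitions $\lambda=(\lambda_1,\dots,\lambda_m)$ of $n$ such that $\lambda_{k+i} \le \ell$ for all $i=1,\dots,m-k$ (i.e. partitions whose Young diagram fits inside the $(k,\ell)$-hook). For a partition $\lambda$, define the hook Schur function $$HS_\lambda(x_1,\dots,x_k;y_1,\dots,y_\ell) = \sum_{\mu \subseteq \lambda} s_\mu(x_1,\dots,x_k)\, s_{\lambda'/\mu'}(y_1,\dots,y_\ell),$$ where $s_\nu$ denotes the (skew) Schur polynomial and $\lambda'/\mu'$ is the conjugate of the skew shape $\lambda/\mu$. Let $\Lambda_n^{(k,\ell)} = \mathrm{span}_F\{HS_\lambda(x_1,\dots,x_k;y_1,\dots,y_\ell) : \lambda \in H_n(k,\ell)\}$ and $\Lambda^{(k,\ell)} = \bigoplus_{n \ge 0} \Lambda_n^{(k,\ell)}$. Let $G_{k,\ell}(t) = \sum_{n\ge 0} |H_n(k,\ell)|\, t^n$ be the generating function of partitions fitting in the $(k,\ell)$-hook, which equals the Hilbert series $\sum_{n \ge 0} \dim_F \Lambda_n^{(k,\ell)}\, t^n$ of $\Lambda^{(k,\ell)}$. Then $$G_{k,\ell}(t) = A^{k,\ell}(t) \prod_{i=1}^{k+\ell} \frac{1}{1-t^i},$$ where $$A^{k,\ell}(t) = 1 + \sum_{i=1}^{\ell} t^{i(k+\ell+1)} \begin{bmatrix} k \\ i \end{bmatrix}_t \sum_{j=0}^{\ell-i} t^{j(k-i+1)}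 \begin{bmatrix} i+j-1 \\ j \end{bmatrix}_t .$$
   Context: For integers $a,b$, the $t$-binomial coefficient is $\begin{bmatrix} a \\ b \end{bmatrix}_t = \frac{(t;t)_a}{(t;t)_b (t;t)_{a-b}}$ when $0 \le b \le a$ and $0$ otherwise, where $(x;t)_n = (1-x)(1-xt)\cdots(1-xt^{n-1})$ and $(x;t)_0=1$. Equivalently, $A^{k,\ell}(t)$ is determined by $A^{k,0}(t)=1$ and $A^{k,\ell}(t) = (1-t^{k+\ell})A^{k,\ell-1}(t) + t^{\ell(k+1)}\begin{bmatrix} k+\ell \\ \ell \end{bmatrix}_t$ for $\ell\ge1$. The hook Schur functions $HS_\lambda$ with $\lambda\in H_n(k,\ell)$ are linearly independent (Berele–Regev), so $\dim_F\Lambda_n^{(k,\ell)} = |H_n(k,\ell)|$. *)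

theory Defs
  imports "HOL-Computational_Algebra.Formal_Power_Series"
begin

text \<open>Integer partitions of n, as weakly decreasing lists of positive integers
  summing to n (lambda_1 = lam ! 0, ...).\<close>
definition is_partition :: "nat \<Rightarrow> nat list \<Rightarrow> bool" where
  "is_partition n lam \<longleftrightarrow> sorted_wrt (\<ge>) lam \<and> 0 \<notin> set lam \<and> sum_list lam = n"

text \<open>H_n(k,l): partitions of n with lambda_{k+i} <= l for all i = 1..m-k
  (0-based: every entry at index >= k is <= l).\<close>
definition hook_partitions :: "nat \<Rightarrow> nat \<Rightarrow> nat \<Rightarrow> nat list set" where
  "hook_partitions n k l =
     {lam. is_partition n lam \<and> (\<forall>i. k \<le> i \<and> i < length lam \<longrightarrow> lam ! i \<le> l)}"

definition G_hook :: "nat \<Rightarrow> nat \<Rightarrow> rat fps" where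
  "G_hook k l = Abs_fps (\<lambda>n. of_nat (card (hook_partitions n k l)))"

definition tpoch :: "nat \<Rightarrow> rat fps" where
  "tpoch n = (\<Prod>i<n. 1 - fps_X ^ (i + 1))"

definition tbinom :: "nat \<Rightarrow> nat \<Rightarrow> rat fps" where
  "tbinom a b = (if b \<le> a then tpoch a / (tpoch b * tpoch (a - b)) else 0)"

definition A_hook :: "nat \<Rightarrow> nat \<Rightarrow> rat fps" where
  "A_hook k l = 1 + (\<Sum>i = 1..l. fps_X ^ (i * (k + l + 1)) * tbinom k i *
      (\<Sum>j = 0..l - i. fps_X ^ (j * (k - i + 1)) * tbinom (i + j - 1) j))"

end

theory Submission
  imports Defs
begin

abbreviation XX :: "rat fps" where "XX \<equiv> fps_X"

fun qb :: "nat \<Rightarrow> nat \<Rightarrow> rat fps" where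
  "qb n 0 = 1"
| "qb 0 (Suc r) = 0"
| "qb (Suc n) (Suc r) = qb n r + XX ^ Suc r * qb n (Suc r)"

lemma qb_gt: "n < r \<Longrightarrow> qb n r = 0"
proof (induction n arbitrary: r)
  case 0 then show ?case by (cases r) auto
next
  case (Suc n) then show ?case by (cases r) auto
qed

lemma tpoch_0[simp]: "tpoch 0 = 1" by (simp add: tpoch_def)
lemma tpoch_Suc: "tpoch (Suc n) = tpoch n * (1 - XX ^ Suc n)"
  by (simp add: tpoch_def)

lemma tpoch_nth0: "fps_nth (tpoch n) 0 = 1"
  by (induction n) (simp_all add: tpoch_Suc)

lemma tpoch_nz: "tpoch n \<noteq> 0"
  using tpoch_nth0[of n] by auto

lemma qb_tpoch: "r \<le> n \<Longrightarrow> qb n r * tpoch r * tpoch (n - r) = tpoch n"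
proof (induction n arbitrary: r)
  case 0 then show ?case by simp
next
  case (Suc n)
  show ?case
  proof (cases r)
    case 0 then show ?thesis by simp
  next
    case (Suc r')
    have IH1: "qb n r' * tpoch r' * tpoch (n - r') = tpoch n" using Suc.IH Suc.prems Suc by simp
    show ?thesis
    proof (cases "r' = n")
      case True
      then have "qb n n = 1" using IH1 tpoch_nz[of n] by simp
      then show ?thesis using True Suc by (simp add: qb_gt tpoch_Suc)
    next
      case False
      then have lt: "Suc r' \<le> n" using Suc.prems Suc by simp
      have IH2: "qb n (Suc r') * tpoch (Suc r') * tpoch (n - Suc r') = tpoch n" using Suc.IH lt by blast
      have e: "tpoch (n - r') = tpoch (n - Suc r') * (1 - XX ^ (n - r'))"
        using lt by (metis Suc_diff_Suc Suc_le_lessD tpoch_Suc)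
      have p: "XX ^ Suc r' * XX ^ (n - r') = XX ^ Suc n"
        using lt by (simp add: power_add[symmetric])
      have "qb (Suc n) r * tpoch r * tpoch (Suc n - r)
          = (qb n r' * tpoch r' * tpoch (n - r')) * (1 - XX ^ Suc r')
            + XX ^ Suc r' * (qb n (Suc r') * tpoch (Suc r') * tpoch (n - Suc r')) * (1 - XX ^ (n - r'))"
        using Suc by (simp add: tpoch_Suc e algebra_simps)
      also have "\<dots> = tpoch n * (1 - XX ^ Suc r') + XX ^ Suc r' * tpoch n * (1 - XX ^ (n - r'))"
        using IH1 IH2 by simp
      also have "\<dots> = tpoch n * (1 - XX ^ Suc r' * XX ^ (n - r'))" by (simp add: algebra_simps)
      also have "\<dots> = tpoch (Suc n)" using p by (simp add: tpoch_Suc)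
      finally show ?thesis .
    qed
  qed
qed

lemma tbinom_qb: "tbinom n r = qb n r"
proof (cases "r \<le> n")
  case True
  have d: "fps_nth (tpoch r * tpoch (n - r)) 0 \<noteq> 0" by (simp add: tpoch_nth0)
  have "tbinom n r = tpoch n * inverse (tpoch r * tpoch (n - r))"
    using True d by (simp add: tbinom_def fps_divide_unit)
  also have "\<dots> = qb n r * ((tpoch r * tpoch (n - r)) * inverse (tpoch r * tpoch (n - r)))"
    using qb_tpoch[OF True] by (simp add: algebra_simps)
  also have "\<dots> = qb n r" using inverse_mult_eq_1'[OF d] by simp
  finally show ?thesis .
next
  case False then show ?thesis by (simp add: tbinom_def qb_gt)
qed

lemma cancel_tp: "a * (tpoch r * tpoch s) = b * (tpoch r * tpoch s) \<Longrightarrow> a = b"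
  using tpoch_nz by (simp)

lemma qb_sym: "r \<le> n \<Longrightarrow> qb n (n - r) = qb n r"
  apply (rule cancel_tp[where r=r and s="n-r"])
  using qb_tpoch[of r n] qb_tpoch[of "n-r" n] by (simp add: algebra_simps)

lemma qb_pascal2: "qb (Suc n) (Suc r) = XX ^ (n - r) * qb n r + qb n (Suc r)"
proof (cases "r \<le> n")
  case False then show ?thesis by (simp add: qb_gt)
next
  case True
  have A: "qb n r * tpoch r * tpoch (n - r) = tpoch n" using qb_tpoch True by blast
  have B: "qb n (Suc r) * tpoch (Suc r) * tpoch (n - r) = tpoch n * (1 - XX ^ (n - r))"
  proof (cases "r = n")
    case True then show ?thesis by (simp add: qb_gt)
  next
    case False
    then have lt: "Suc r \<le> n" using True by simp
    have e: "tpoch (n - r) = tpoch (n - Suc r) * (1 - XX ^ (n - r))"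
      using lt by (metis Suc_diff_Suc Suc_le_lessD tpoch_Suc)
    show ?thesis using qb_tpoch[OF lt] by (simp add: e algebra_simps)
  qed
  have p: "XX ^ (n - r) * XX ^ Suc r = XX ^ Suc n"
    using True by (simp add: power_add[symmetric])
  show ?thesis
  proof (rule cancel_tp[where r="Suc r" and s="n - r"])
    have "(XX ^ (n - r) * qb n r + qb n (Suc r)) * (tpoch (Suc r) * tpoch (n - r))
       = XX ^ (n - r) * (qb n r * tpoch r * tpoch (n - r)) * (1 - XX ^ Suc r)
         + qb n (Suc r) * tpoch (Suc r) * tpoch (n - r)"
      by (simp add: tpoch_Suc algebra_simps)
    also have "\<dots> = tpoch n * (1 - XX ^ (n - r) * XX ^ Suc r)"
      using A B by (simp add: algebra_simps)
    also have "\<dots> = tpoch (Suc n)" using p by (simp add: tpoch_Suc)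
    also have "\<dots> = qb (Suc n) (Suc r) * (tpoch (Suc r) * tpoch (n - r))"
      using qb_tpoch[of "Suc r" "Suc n"] True by (simp add: algebra_simps)
    finally show "qb (Suc n) (Suc r) * (tpoch (Suc r) * tpoch (n - r)) =
      (XX ^ (n - r) * qb n r + qb n (Suc r)) * (tpoch (Suc r) * tpoch (n - r))" by (rule sym)
  qed
qed

lemma qb_shift: "(1 - XX ^ Suc i) * qb k (Suc i) = (1 - XX ^ (k - i)) * qb k i"
proof (cases "i < k")
  case False then show ?thesis
    by (cases "i = k") (simp_all add: qb_gt)
next
  case True
  then have lt: "Suc i \<le> k" by simp
  have e: "tpoch (k - i) = tpoch (k - Suc i) * (1 - XX ^ (k - i))"
    using lt by (metis Suc_diff_Suc Suc_le_lessD tpoch_Suc)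
  show ?thesis
  proof (rule cancel_tp[where r="Suc i" and s="k - Suc i"])
    have "(1 - XX ^ Suc i) * qb k (Suc i) * (tpoch (Suc i) * tpoch (k - Suc i))
       = (1 - XX ^ Suc i) * (qb k (Suc i) * tpoch (Suc i) * tpoch (k - Suc i))" by (simp add: algebra_simps)
    also have "\<dots> = (1 - XX ^ Suc i) * tpoch k" using qb_tpoch[OF lt] by simp
    also have "\<dots> = (1 - XX ^ Suc i) * (qb k i * tpoch i * tpoch (k - i))" using qb_tpoch[of i k] lt by simp
    also have "\<dots> = (1 - XX ^ (k - i)) * qb k i * (tpoch (Suc i) * tpoch (k - Suc i))"
      by (simp only: e tpoch_Suc[of i]) (simp add: algebra_simps)
    finally show "(1 - XX ^ Suc i) * qb k (Suc i) * (tpoch (Suc i) * tpoch (k - Suc i)) =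
      (1 - XX ^ (k - i)) * qb k i * (tpoch (Suc i) * tpoch (k - Suc i))" .
  qed
qed


lemma qb_nn[simp]: "qb n n = 1"
  by (induction n) (simp_all add: qb_gt)

lemma qvand: "qb (m + n) r = (\<Sum>j\<le>r. XX ^ (j * (n + j - r)) * qb m j * qb n (r - j))"
proof (induction m arbitrary: r)
  case 0
  then show ?case by (cases r) (simp_all add: sum.atMost_Suc_shift del: sum.atMost_Suc)
next
  case (Suc m)
  show ?case
  proof (cases r)
    case 0 then show ?thesis by simp
  next
    case (Suc r')
    have IH1: "qb (m + n) r' = (\<Sum>j\<le>r'. XX ^ (j * (n + j - r')) * qb m j * qb n (r' - j))"
      using Suc.IH by blast
    have IH2: "qb (m + n) (Suc r') = qb n (Suc r') +
        (\<Sum>j\<le>r'. XX ^ (Suc j * (n + j - r')) * qb m (Suc j) * qb n (r' - j))"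
      using Suc.IH[of "Suc r'"] by (simp add: sum.atMost_Suc_shift del: sum.atMost_Suc)
    have trm: "XX ^ (Suc j * (n + j - r')) * XX ^ (m - j) * qb m j * qb n (r' - j)
        = XX ^ (m + n - r') * (XX ^ (j * (n + j - r')) * qb m j * qb n (r' - j))" if "j \<le> r'" for j
    proof (cases "m < j \<or> n < r' - j")
      case True then show ?thesis by (auto simp: qb_gt)
    next
      case False
      define x where "x = n + j - r'"
      have hx: "m + n - r' = (m - j) + x" using False that unfolding x_def by arith
      have "Suc j * (n + j - r') + (m - j) = (m + n - r') + j * (n + j - r')"
        unfolding x_def[symmetric] hx by simp
      then have "XX ^ (Suc j * (n + j - r')) * XX ^ (m - j) = XX ^ (m + n - r') * XX ^ (j * (n + j - r'))"
        by (metis power_add)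
      then show ?thesis by (simp add: algebra_simps)
    qed
    have "(\<Sum>j\<le>r. XX ^ (j * (n + j - r)) * qb (Suc m) j * qb n (r - j))
        = qb n (Suc r') + (\<Sum>j\<le>r'. XX ^ (Suc j * (n + j - r')) * (XX ^ (m - j) * qb m j + qb m (Suc j)) * qb n (r' - j))"
      using Suc by (simp add: sum.atMost_Suc_shift qb_pascal2 del: qb.simps(3) sum.atMost_Suc)
    also have "\<dots> = qb n (Suc r') + (\<Sum>j\<le>r'. XX ^ (Suc j * (n + j - r')) * XX ^ (m - j) * qb m j * qb n (r' - j))
        + (\<Sum>j\<le>r'. XX ^ (Suc j * (n + j - r')) * qb m (Suc j) * qb n (r' - j))"
      by (simp add: algebra_simps sum.distrib)
    also have "(\<Sum>j\<le>r'. XX ^ (Suc j * (n + j - r')) * XX ^ (m - j) * qb m j * qb n (r' - j))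
        = XX ^ (m + n - r') * qb (m + n) r'"
    proof -
      have "(\<Sum>j\<le>r'. XX ^ (Suc j * (n + j - r')) * XX ^ (m - j) * qb m j * qb n (r' - j))
        = (\<Sum>j\<le>r'. XX ^ (m + n - r') * (XX ^ (j * (n + j - r')) * qb m j * qb n (r' - j)))"
        by (rule sum.cong[OF refl]) (rule trm, simp)
      then show ?thesis by (simp only: IH1 sum_distrib_left)
    qed
    finally have "(\<Sum>j\<le>r. XX ^ (j * (n + j - r)) * qb (Suc m) j * qb n (r - j))
        = XX ^ (m + n - r') * qb (m + n) r' + qb (m + n) (Suc r')"
      using IH2 by (simp add: algebra_simps)
    also have "\<dots> = qb (Suc m + n) r" using Suc by (simp add: qb_pascal2 del: qb.simps(3))
    finally show ?thesis by (rule sym)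
  qed
qed

lemma vand2: "qb (k + l) l = (\<Sum>i\<le>l. XX ^ (i * i) * qb k i * qb l i)"
  unfolding qvand[of k l l] by (rule sum.cong) (auto simp: qb_sym)

lemma phi: "(\<Sum>j<Suc n. XX ^ (j * (c + 1)) * qb (i + j - 1) j)
   = (1 - XX ^ c) * (\<Sum>j<n. XX ^ (j * c) * qb (i + j) j) + XX ^ (n * c) * qb (n + i) n"
proof (induction n)
  case 0 then show ?case by simp
next
  case (Suc n)
  have p1: "XX ^ (Suc n * c) = XX ^ (n * c) * XX ^ c" by (simp add: power_add[symmetric] algebra_simps)
  have p2: "XX ^ (Suc n * (c + 1)) = XX ^ (n * c) * XX ^ c * XX ^ Suc n"
    by (simp add: power_add[symmetric] algebra_simps)
  have q: "qb (Suc n + i) (Suc n) = qb (n + i) n + XX ^ Suc n * qb (n + i) (Suc n)" by simp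
  have s: "(\<Sum>j<Suc n. XX ^ (j * c) * qb (i + j) j) = (\<Sum>j<n. XX ^ (j * c) * qb (i + j) j) + XX ^ (n * c) * qb (n + i) n"
    by (simp add: add.commute)
  have "(\<Sum>j<Suc (Suc n). XX ^ (j * (c + 1)) * qb (i + j - 1) j)
      = (1 - XX ^ c) * (\<Sum>j<n. XX ^ (j * c) * qb (i + j) j) + XX ^ (n * c) * qb (n + i) n
        + XX ^ (Suc n * (c + 1)) * qb (n + i) (Suc n)"
    using Suc.IH by (simp add: add.commute)
  also have "\<dots> = (1 - XX ^ c) * (\<Sum>j<n. XX ^ (j * c) * qb (i + j) j) + XX ^ (n * c) * qb (n + i) n
        + XX ^ (n * c) * XX ^ c * XX ^ Suc n * qb (n + i) (Suc n)"
    by (simp only: p2)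
  also have "\<dots> = (1 - XX ^ c) * ((\<Sum>j<n. XX ^ (j * c) * qb (i + j) j) + XX ^ (n * c) * qb (n + i) n)
      + XX ^ (n * c) * XX ^ c * (qb (n + i) n + XX ^ Suc n * qb (n + i) (Suc n))"
    by (simp add: algebra_simps)
  also have "\<dots> = (1 - XX ^ c) * (\<Sum>j<Suc n. XX ^ (j * c) * qb (i + j) j) + XX ^ (Suc n * c) * qb (Suc n + i) (Suc n)"
    by (simp only: s q p1)
  finally show ?case .
qed

definition RR :: "nat \<Rightarrow> nat \<Rightarrow> nat \<Rightarrow> rat fps" where
  "RR k l i = XX ^ (i * (k + l + 1)) * qb k i * (\<Sum>j<l + 1 - i. XX ^ (j * (k - i + 1)) * qb (i + j - 1) j)"

lemma RR_zero: "l < i \<Longrightarrow> RR k l i = 0"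
  by (simp add: RR_def)

lemma RR_rec: "RR k (Suc L) i = (XX ^ i - XX ^ (k + Suc L)) * RR k L i
   + (1 - XX ^ Suc i) * RR k L (Suc i) + XX ^ (Suc L * (k + 1) + i * i) * qb k i * qb (Suc L) i"
proof (cases "k < i \<or> Suc L < i")
  case True then show ?thesis by (auto simp: RR_def qb_gt)
next
  case False
  then have ik: "i \<le> k" and iL: "i \<le> Suc L" by auto
  show ?thesis
  proof (cases "i = Suc L")
    case True
    have e: "XX ^ (Suc L * (k + Suc L + 1)) = XX ^ (Suc L * (k + 1) + Suc L * Suc L)"
      by (simp add: algebra_simps)
    have a: "RR k (Suc L) (Suc L) = XX ^ (Suc L * (k + Suc L + 1)) * qb k (Suc L)" by (simp add: RR_def)
    also have "\<dots> = XX ^ (Suc L * (k + 1) + Suc L * Suc L) * qb k (Suc L) * qb (Suc L) (Suc L)"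
      by (simp only: e qb_nn mult_1_right)
    finally show ?thesis using True by (simp add: RR_zero)
  next
    case False
    then have iL': "i \<le> L" using iL by simp
    obtain c where kc: "k = i + c" using ik le_Suc_ex by blast
    obtain n where Ln: "L = i + n" using iL' le_Suc_ex by blast
    define Sa where "Sa = (\<Sum>j<Suc n. XX ^ (j * (c + 1)) * qb (i + j - 1) j)"
    define Sb where "Sb = (\<Sum>j<n. XX ^ (j * c) * qb (i + j) j)"
    define Sb' where "Sb' = (\<Sum>j<n. XX ^ (j * (k - Suc i + 1)) * qb (Suc i + j - 1) j)"
    define P where "P = XX ^ (i * (k + Suc L))"
    define B0 where "B0 = qb (n + i) n"
    define B1 where "B1 = qb (n + i) (Suc n)"
    have R1: "RR k (Suc L) i = XX ^ i * P * qb k i * (Sa + XX ^ ((n + 1) * (c + 1)) * B1)"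
    proof -
      have "Suc L + 1 - i = Suc (Suc n)" using Ln by simp
      moreover have "i * (k + Suc L + 1) = i + i * (k + Suc L)" by (simp add: algebra_simps)
      ultimately show ?thesis
        by (simp add: RR_def Sa_def P_def B1_def kc power_add algebra_simps)
    qed
    have R2: "RR k L i = P * qb k i * Sa"
    proof -
      have "L + 1 - i = Suc n" using Ln by simp
      then show ?thesis by (simp add: RR_def Sa_def P_def kc)
    qed
    have R3: "RR k L (Suc i) = XX ^ (k + Suc L) * P * qb k (Suc i) * Sb'"
    proof -
      have "L + 1 - Suc i = n" using Ln by simp
      moreover have "Suc i * (k + L + 1) = (k + Suc L) + i * (k + Suc L)" by (simp add: algebra_simps)
      ultimately show ?thesis by (simp add: RR_def Sb'_def P_def power_add)
    qed
    have Sb_eq: "(1 - XX ^ c) * Sb' = (1 - XX ^ c) * Sb"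
    proof (cases "c = 0")
      case True then show ?thesis by simp
    next
      case False
      then have "Sb' = Sb" unfolding Sb'_def Sb_def using kc
        by (intro sum.cong) (auto simp: Suc_diff_le)
      then show ?thesis by simp
    qed
    have shift: "(1 - XX ^ Suc i) * qb k (Suc i) = (1 - XX ^ c) * qb k i"
      using qb_shift[of i k] kc by simp
    have ph: "Sa = (1 - XX ^ c) * Sb + XX ^ (n * c) * B0"
      unfolding Sa_def Sb_def B0_def by (rule phi)
    have last: "qb (Suc L) i = XX ^ i * B0 + B1"
    proof -
      have "qb (Suc L) i = qb (Suc L) (Suc L - i)" using iL by (simp add: qb_sym)
      also have "\<dots> = qb (Suc (n + i)) (Suc n)" using Ln by (simp add: Suc_diff_le add.commute)
      also have "\<dots> = XX ^ i * B0 + B1" unfolding B0_def B1_def by (simp only: qb_pascal2) simp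
      finally show ?thesis .
    qed
    have e3: "XX ^ (Suc L * (k + 1) + i * i) = XX ^ i * P * XX ^ ((n + 1) * (c + 1))"
    proof -
      have "Suc L * (k + 1) + i * i = i + i * (k + Suc L) + (n + 1) * (c + 1)"
        using kc Ln by (simp add: algebra_simps)
      then show ?thesis by (simp add: P_def power_add)
    qed
    have e4: "XX ^ (Suc L * (k + 1) + i * i) * XX ^ i = XX ^ (k + Suc L) * P * XX ^ (n * c)"
    proof -
      have "Suc L * (k + 1) + i * i + i = (k + Suc L) + i * (k + Suc L) + n * c"
        using kc Ln by (simp add: algebra_simps)
      then show ?thesis by (simp add: P_def power_add[symmetric])
    qed
    have "(XX ^ i - XX ^ (k + Suc L)) * RR k L i
        + (1 - XX ^ Suc i) * RR k L (Suc i) + XX ^ (Suc L * (k + 1) + i * i) * qb k i * qb (Suc L) i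
      = (XX ^ i - XX ^ (k + Suc L)) * (P * qb k i * Sa)
        + XX ^ (k + Suc L) * P * ((1 - XX ^ Suc i) * qb k (Suc i)) * Sb'
        + XX ^ (Suc L * (k + 1) + i * i) * qb k i * (XX ^ i * B0 + B1)"
      by (simp add: R2 R3 last algebra_simps)
    also have "\<dots> = (XX ^ i - XX ^ (k + Suc L)) * (P * qb k i * Sa)
        + XX ^ (k + Suc L) * P * qb k i * ((1 - XX ^ c) * Sb')
        + XX ^ (Suc L * (k + 1) + i * i) * qb k i * (XX ^ i * B0 + B1)"
      by (simp only: shift) (simp add: algebra_simps)
    also have "\<dots> = (XX ^ i - XX ^ (k + Suc L)) * (P * qb k i * Sa)
        + XX ^ (k + Suc L) * P * qb k i * (Sa - XX ^ (n * c) * B0)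
        + XX ^ (Suc L * (k + 1) + i * i) * qb k i * (XX ^ i * B0 + B1)"
      by (simp add: Sb_eq ph)
    also have "\<dots> = XX ^ i * P * qb k i * Sa
        - XX ^ (k + Suc L) * P * XX ^ (n * c) * qb k i * B0
        + (XX ^ (Suc L * (k + 1) + i * i) * XX ^ i) * qb k i * B0
        + XX ^ (Suc L * (k + 1) + i * i) * qb k i * B1"
      by (simp add: algebra_simps)
    also have "\<dots> = XX ^ i * P * qb k i * (Sa + XX ^ ((n + 1) * (c + 1)) * B1)"
      by (simp only: e4) (simp only: e3, simp add: algebra_simps)
    finally show ?thesis using R1 by simp
  qed
qed

lemma RR_0: "RR k l 0 = 1"
  by (simp add: RR_def sum.lessThan_Suc_shift qb_gt del: sum.lessThan_Suc)

lemma A_as_RR: "A_hook k l = (\<Sum>i\<le>l. RR k l i)"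
proof -
  have "(\<Sum>i\<le>l. RR k l i) = RR k l 0 + (\<Sum>i\<in>{1..l}. RR k l i)"
    by (simp add: atMost_atLeast0 sum.atLeast_Suc_atMost)
  also have "(\<Sum>i\<in>{1..l}. RR k l i) = (\<Sum>i = 1..l. fps_X ^ (i * (k + l + 1)) * tbinom k i *
      (\<Sum>j = 0..l - i. fps_X ^ (j * (k - i + 1)) * tbinom (i + j - 1) j))"
  proof (rule sum.cong)
    fix i assume "i \<in> {1..l}"
    then have "l + 1 - i = Suc (l - i)" by auto
    then show "RR k l i = fps_X ^ (i * (k + l + 1)) * tbinom k i *
      (\<Sum>j = 0..l - i. fps_X ^ (j * (k - i + 1)) * tbinom (i + j - 1) j)"
      by (simp add: RR_def tbinom_qb atLeast0AtMost lessThan_Suc_atMost)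
  qed simp
  finally show ?thesis by (simp add: A_hook_def RR_0)
qed

lemma A_rec: "A_hook k (Suc L) = (1 - XX ^ (k + Suc L)) * A_hook k L + XX ^ (Suc L * (k + 1)) * qb (k + Suc L) (Suc L)"
proof -
  define g where "g i = (1 - XX ^ i) * RR k L i" for i
  have S1: "(\<Sum>i\<le>Suc L. (XX ^ i - XX ^ (k + Suc L)) * RR k L i) = (\<Sum>i\<le>L. (XX ^ i - XX ^ (k + Suc L)) * RR k L i)"
    by (simp add: RR_zero)
  have S2: "(\<Sum>i\<le>Suc L. (1 - XX ^ Suc i) * RR k L (Suc i)) = (\<Sum>i\<le>L. g i)"
  proof -
    have "(\<Sum>i\<le>Suc L. (1 - XX ^ Suc i) * RR k L (Suc i)) = (\<Sum>i\<le>Suc L. g (Suc i))" by (simp add: g_def)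
    also have "\<dots> = (\<Sum>i\<le>L. g (Suc i))" by (simp add: g_def RR_zero)
    also have "\<dots> = (\<Sum>i\<le>Suc L. g i)" by (simp add: sum.atMost_Suc_shift g_def del: sum.atMost_Suc)
    also have "\<dots> = (\<Sum>i\<le>L. g i)" by (simp add: g_def RR_zero)
    finally show ?thesis .
  qed
  have S3: "(\<Sum>i\<le>Suc L. XX ^ (Suc L * (k + 1) + i * i) * qb k i * qb (Suc L) i)
      = XX ^ (Suc L * (k + 1)) * qb (k + Suc L) (Suc L)"
    by (simp only: vand2 sum_distrib_left power_add) (simp add: algebra_simps)
  have "A_hook k (Suc L) = (\<Sum>i\<le>Suc L. RR k (Suc L) i)" by (rule A_as_RR)
  also have "\<dots> = (\<Sum>i\<le>Suc L. (XX ^ i - XX ^ (k + Suc L)) * RR k L i)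
     + (\<Sum>i\<le>Suc L. (1 - XX ^ Suc i) * RR k L (Suc i))
     + (\<Sum>i\<le>Suc L. XX ^ (Suc L * (k + 1) + i * i) * qb k i * qb (Suc L) i)"
    by (simp only: RR_rec sum.distrib)
  also have "\<dots> = (\<Sum>i\<le>L. (XX ^ i - XX ^ (k + Suc L)) * RR k L i + g i)
     + XX ^ (Suc L * (k + 1)) * qb (k + Suc L) (Suc L)"
    by (simp only: S1 S2 S3 sum.distrib)
  also have "(\<Sum>i\<le>L. (XX ^ i - XX ^ (k + Suc L)) * RR k L i + g i) = (\<Sum>i\<le>L. (1 - XX ^ (k + Suc L)) * RR k L i)"
    by (rule sum.cong) (simp_all add: g_def algebra_simps)
  also have "\<dots> = (1 - XX ^ (k + Suc L)) * A_hook k L"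
    by (simp add: A_as_RR sum_distrib_left)
  finally show ?thesis .
qed

lemma A_0: "A_hook k 0 = 1" by (simp add: A_hook_def)


definition pset :: "nat \<Rightarrow> (nat list \<Rightarrow> bool) \<Rightarrow> nat list set" where
  "pset n P = {xs. is_partition n xs \<and> P xs}"

definition gf :: "(nat list \<Rightarrow> bool) \<Rightarrow> rat fps" where
  "gf P = Abs_fps (\<lambda>n. of_nat (card (pset n P)))"

lemma len_le_sum: "0 \<notin> set xs \<Longrightarrow> length xs \<le> sum_list (xs::nat list)"
  by (induction xs) auto

lemma part_len: "is_partition n xs \<Longrightarrow> length xs \<le> n"
  unfolding is_partition_def using len_le_sum by blast

lemma part_elem: "is_partition n xs \<Longrightarrow> x \<in> set xs \<Longrightarrow> x \<le> n"
  unfolding is_partition_def using member_le_sum_list[of x xs] by simp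

lemma part_pos: "is_partition n xs \<Longrightarrow> x \<in> set xs \<Longrightarrow> 0 < x"
  unfolding is_partition_def by (cases x) auto

lemma part_nth_pos: "is_partition n xs \<Longrightarrow> i < length xs \<Longrightarrow> 0 < xs ! i"
  using part_pos nth_mem by blast

lemma part_nth_mono: "is_partition n xs \<Longrightarrow> i \<le> j \<Longrightarrow> j < length xs \<Longrightarrow> xs ! j \<le> xs ! i"
  unfolding is_partition_def using sorted_wrt_iff_nth_less[of "(\<ge>)" xs]
  by (cases "i = j") auto

lemma finite_pset: "finite (pset n P)"
proof (rule finite_subset)
  show "pset n P \<subseteq> {xs. set xs \<subseteq> {..n} \<and> length xs \<le> n}"
    unfolding pset_def using part_len part_elem by fastforce
  show "finite {xs. set xs \<subseteq> {..n} \<and> length xs \<le> n}" by (rule finite_lists_length_le) simp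
qed

lemma gf_split: "gf P = gf (\<lambda>xs. P xs \<and> Q xs) + gf (\<lambda>xs. P xs \<and> \<not> Q xs)"
proof (rule fps_ext)
  fix n
  have "pset n P = pset n (\<lambda>xs. P xs \<and> Q xs) \<union> pset n (\<lambda>xs. P xs \<and> \<not> Q xs)"
    and "pset n (\<lambda>xs. P xs \<and> Q xs) \<inter> pset n (\<lambda>xs. P xs \<and> \<not> Q xs) = {}"
    by (auto simp: pset_def)
  then have "card (pset n P) = card (pset n (\<lambda>xs. P xs \<and> Q xs)) + card (pset n (\<lambda>xs. P xs \<and> \<not> Q xs))"
    by (simp add: card_Un_disjoint finite_pset)
  then show "fps_nth (gf P) n = fps_nth (gf (\<lambda>xs. P xs \<and> Q xs) + gf (\<lambda>xs. P xs \<and> \<not> Q xs)) n"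
    by (simp add: gf_def)
qed

lemma gf_shift:
  assumes "\<And>n. a \<le> n \<Longrightarrow> card (pset n P) = card (pset (n - a) Q)"
      and "\<And>n. n < a \<Longrightarrow> pset n P = {}"
  shows "gf P = XX ^ a * gf Q"
proof (rule fps_ext)
  fix n show "fps_nth (gf P) n = fps_nth (XX ^ a * gf Q) n"
    using assms by (cases "n < a") (simp_all add: gf_def fps_X_power_mult_nth)
qed

lemma gf_cong: "(\<And>n xs. is_partition n xs \<Longrightarrow> P xs = Q xs) \<Longrightarrow> gf P = gf Q"
proof -
  assume a: "\<And>n xs. is_partition n xs \<Longrightarrow> P xs = Q xs"
  have "\<And>n. pset n P = pset n Q" using a by (auto simp: pset_def)
  then show ?thesis by (simp add: gf_def)
qed

lemma empty_shift: "(\<And>n xs. is_partition n xs \<Longrightarrow> P xs \<Longrightarrow> a \<le> n) \<Longrightarrow> n < a \<Longrightarrow> pset n P = {}"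
  unfolding pset_def by force

lemma take_ge:
  assumes "is_partition n xs" "x \<in> set (take (Suc k) xs)" "Suc k \<le> length xs"
  shows "xs ! k \<le> x"
proof -
  obtain i where "i < Suc k" "x = xs ! i" using assms(2,3) by (auto simp: in_set_conv_nth)
  then show ?thesis using part_nth_mono[OF assms(1), of i k] assms(3) by simp
qed

lemma drop_le: "is_partition n xs \<Longrightarrow> K < length xs \<Longrightarrow> y \<in> set (drop K xs) \<Longrightarrow> y \<le> xs ! K"
  by (auto simp: in_set_conv_nth intro: part_nth_mono)

lemma card_cons:
  assumes "0 < l" "l \<le> n"
  shows "card (pset n (\<lambda>xs. xs \<noteq> [] \<and> hd xs = l)) = card (pset (n - l) (\<lambda>xs. \<forall>x\<in>set xs. x \<le> l))"
proof -
  have "pset n (\<lambda>xs. xs \<noteq> [] \<and> hd xs = l) = Cons l ` pset (n - l) (\<lambda>xs. \<forall>x\<in>set xs. x \<le> l)"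
  proof
    show "pset n (\<lambda>xs. xs \<noteq> [] \<and> hd xs = l) \<subseteq> Cons l ` pset (n - l) (\<lambda>xs. \<forall>x\<in>set xs. x \<le> l)"
    proof
      fix xs assume "xs \<in> pset n (\<lambda>xs. xs \<noteq> [] \<and> hd xs = l)"
      then obtain ys where xs: "xs = l # ys" and p: "is_partition n (l # ys)"
        unfolding pset_def by (cases xs) auto
      have "ys \<in> pset (n - l) (\<lambda>xs. \<forall>x\<in>set xs. x \<le> l)"
        using p by (auto simp: pset_def is_partition_def)
      then show "xs \<in> Cons l ` pset (n - l) (\<lambda>xs. \<forall>x\<in>set xs. x \<le> l)" using xs by blast
    qed
    show "Cons l ` pset (n - l) (\<lambda>xs. \<forall>x\<in>set xs. x \<le> l) \<subseteq> pset n (\<lambda>xs. xs \<noteq> [] \<and> hd xs = l)"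
      using assms by (auto simp: pset_def is_partition_def)
  qed
  moreover have "inj (Cons l)" by (simp add: inj_def)
  ultimately show ?thesis by (simp add: card_image inj_on_subset)
qed

lemma cons_empty: "n < l \<Longrightarrow> pset n (\<lambda>xs. xs \<noteq> [] \<and> hd xs = l) = {}"
  by (rule empty_shift[where a=l]) (use hd_in_set part_elem in blast)+

definition Pg :: "nat \<Rightarrow> rat fps" where "Pg l = gf (\<lambda>xs. \<forall>x\<in>set xs. x \<le> l)"

lemma Pg_0: "Pg 0 = 1"
proof -
  have "pset n (\<lambda>xs. \<forall>x\<in>set xs. x \<le> 0) = (if n = 0 then {[]} else {})" for n
  proof -
    have e: "(is_partition n xs \<and> (\<forall>x\<in>set xs. x \<le> 0)) = (is_partition n xs \<and> xs = [])" for xs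
    proof (cases xs)
      case Nil then show ?thesis by simp
    next
      case (Cons a t)
      have "is_partition n xs \<Longrightarrow> 0 < a" using part_pos[of n xs a] Cons by simp
      then show ?thesis using Cons by auto
    qed
    have "pset n (\<lambda>xs. \<forall>x\<in>set xs. x \<le> 0) = {xs. is_partition n xs \<and> xs = []}"
      unfolding pset_def using e by simp
    also have "\<dots> = (if n = 0 then {[]} else {})" by (auto simp: is_partition_def)
    finally show ?thesis .
  qed
  then show ?thesis unfolding Pg_def gf_def by (intro fps_ext) simp
qed

lemma Pg_Suc: "Pg (Suc l) = Pg l + XX ^ Suc l * Pg (Suc l)"
proof -
  have "Pg (Suc l) = gf (\<lambda>xs. (\<forall>x\<in>set xs. x \<le> Suc l) \<and> (\<forall>x\<in>set xs. x \<le> l))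
      + gf (\<lambda>xs. (\<forall>x\<in>set xs. x \<le> Suc l) \<and> \<not> (\<forall>x\<in>set xs. x \<le> l))"
    unfolding Pg_def by (rule gf_split)
  also have "gf (\<lambda>xs. (\<forall>x\<in>set xs. x \<le> Suc l) \<and> (\<forall>x\<in>set xs. x \<le> l)) = Pg l"
    unfolding Pg_def by (rule gf_cong) auto
  also have "gf (\<lambda>xs. (\<forall>x\<in>set xs. x \<le> Suc l) \<and> \<not> (\<forall>x\<in>set xs. x \<le> l)) = gf (\<lambda>xs. xs \<noteq> [] \<and> hd xs = Suc l)"
  proof (rule gf_cong)
    fix n xs assume p: "is_partition n xs"
    show "((\<forall>x\<in>set xs. x \<le> Suc l) \<and> \<not> (\<forall>x\<in>set xs. x \<le> l)) = (xs \<noteq> [] \<and> hd xs = Suc l)"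
    proof (cases xs)
      case Nil then show ?thesis by simp
    next
      case (Cons h t)
      then have "\<forall>y\<in>set t. y \<le> h" using p by (simp add: is_partition_def)
      then show ?thesis using Cons by force
    qed
  qed
  also have "\<dots> = XX ^ Suc l * Pg (Suc l)"
    unfolding Pg_def by (rule gf_shift) (simp_all add: card_cons cons_empty)
  finally show ?thesis .
qed

lemma Pg_tpoch: "Pg l * tpoch l = 1"
proof (induction l)
  case 0 then show ?case by (simp add: Pg_0)
next
  case (Suc l)
  have h: "Pg (Suc l) * (1 - XX ^ Suc l) = Pg l"
    using Pg_Suc[of l] by (simp add: algebra_simps)
  have "Pg (Suc l) * tpoch (Suc l) = (Pg (Suc l) * (1 - XX ^ Suc l)) * tpoch l"
    by (simp add: tpoch_Suc ac_simps)
  also have "\<dots> = Pg l * tpoch l" by (simp only: h)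
  finally show ?case using Suc.IH by simp
qed


lemma card_butlast:
  assumes "1 \<le> n"
  shows "card (pset n (\<lambda>xs. length xs = Suc k \<and> last xs = 1)) = card (pset (n - 1) (\<lambda>xs. length xs = k))"
proof -
  have "pset n (\<lambda>xs. length xs = Suc k \<and> last xs = 1) = (\<lambda>ys. ys @ [1]) ` pset (n - 1) (\<lambda>xs. length xs = k)"
  proof
    show "pset n (\<lambda>xs. length xs = Suc k \<and> last xs = 1) \<subseteq> (\<lambda>ys. ys @ [1]) ` pset (n - 1) (\<lambda>xs. length xs = k)"
    proof
      fix xs assume "xs \<in> pset n (\<lambda>xs. length xs = Suc k \<and> last xs = 1)"
      then have p: "is_partition n xs" and l: "length xs = Suc k" and la: "last xs = 1"
        by (auto simp: pset_def)
      have ne: "xs \<noteq> []" using l by auto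
      have xs: "xs = butlast xs @ [1]" using append_butlast_last_id[OF ne] la by simp
      have "is_partition (n - 1) (butlast xs)"
        using p xs unfolding is_partition_def
        by (metis (no_types, lifting) add_diff_cancel_right' in_set_butlastD sorted_wrt_append sum_list_append sum_list_simps(1) sum_list_simps(2) add.right_neutral)
      then have "butlast xs \<in> pset (n - 1) (\<lambda>xs. length xs = k)" using l by (simp add: pset_def)
      then show "xs \<in> (\<lambda>ys. ys @ [1]) ` pset (n - 1) (\<lambda>xs. length xs = k)" using xs by blast
    qed
    show "(\<lambda>ys. ys @ [1]) ` pset (n - 1) (\<lambda>xs. length xs = k) \<subseteq> pset n (\<lambda>xs. length xs = Suc k \<and> last xs = 1)"
    proof
      fix xs assume "xs \<in> (\<lambda>ys. ys @ [1]) ` pset (n - 1) (\<lambda>xs. length xs = k)"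
      then obtain ys where xs: "xs = ys @ [1]" and p: "is_partition (n - 1) ys" and l: "length ys = k"
        by (auto simp: pset_def)
      have "\<forall>y\<in>set ys. 1 \<le> y" using part_pos[OF p] by (simp add: Suc_le_eq)
      then have "is_partition n xs" using p assms xs unfolding is_partition_def
        by (auto simp: sorted_wrt_append)
      then show "xs \<in> pset n (\<lambda>xs. length xs = Suc k \<and> last xs = 1)" using xs l by (simp add: pset_def)
    qed
  qed
  moreover have "inj (\<lambda>ys::nat list. ys @ [1])" by (simp add: inj_def)
  ultimately show ?thesis by (simp add: card_image inj_on_subset)
qed

definition decL :: "nat \<Rightarrow> nat list \<Rightarrow> nat list" where
  "decL K xs = map (\<lambda>x. x - 1) (take K xs) @ drop K xs"
definition incL :: "nat \<Rightarrow> nat list \<Rightarrow> nat list" where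
  "incL K ys = map Suc (take K ys) @ drop K ys"

lemma sum_map_pred: "\<forall>x\<in>set ys. 1 \<le> x \<Longrightarrow> sum_list (map (\<lambda>x. x - 1) ys) + length ys = sum_list (ys::nat list)"
  by (induction ys) auto

lemma sum_map_Suc: "sum_list (map Suc ys) = sum_list ys + length ys"
  by (induction ys) auto

lemma sum_take_drop: "sum_list (take K xs) + sum_list (drop K xs) = sum_list (xs::nat list)"
  by (metis append_take_drop_id sum_list_append)

lemma dec_bij:
  assumes "K \<le> n"
  shows "card (pset n (\<lambda>xs. K \<le> length xs \<and> R (drop K xs) \<and> (\<forall>x\<in>set (take K xs). 2 \<le> x \<and> (\<forall>y\<in>set (drop K xs). y < x))))
       = card (pset (n - K) (\<lambda>ys. K \<le> length ys \<and> R (drop K ys)))"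
proof (rule bij_betw_same_card[of "decL K"], rule bij_betw_byWitness[where f'="incL K"])
  let ?A = "pset n (\<lambda>xs. K \<le> length xs \<and> R (drop K xs) \<and> (\<forall>x\<in>set (take K xs). 2 \<le> x \<and> (\<forall>y\<in>set (drop K xs). y < x)))"
  let ?B = "pset (n - K) (\<lambda>ys. K \<le> length ys \<and> R (drop K ys))"
  show "\<forall>a\<in>?A. incL K (decL K a) = a"
  proof
    fix xs assume "xs \<in> ?A"
    then have l: "K \<le> length xs" and t: "\<forall>x\<in>set (take K xs). 2 \<le> x" by (auto simp: pset_def)
    have "map Suc (map (\<lambda>x. x - 1) (take K xs)) = take K xs"
      unfolding map_map by (rule map_idI) (use t in auto)
    then show "incL K (decL K xs) = xs" using l by (simp add: incL_def decL_def)
  qed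
  show "\<forall>a\<in>?B. decL K (incL K a) = a"
    by (auto simp: incL_def decL_def pset_def map_idI)
  show "decL K ` ?A \<subseteq> ?B"
  proof
    fix zs assume "zs \<in> decL K ` ?A"
    then obtain xs where zs: "zs = decL K xs" and "xs \<in> ?A" by blast
    then have p: "is_partition n xs" and l: "K \<le> length xs" and r: "R (drop K xs)"
      and t: "\<forall>x\<in>set (take K xs). 2 \<le> x \<and> (\<forall>y\<in>set (drop K xs). y < x)" by (auto simp: pset_def)
    have s: "sorted_wrt (\<ge>) xs" using p by (simp add: is_partition_def)
    then have s1: "sorted_wrt (\<ge>) (take K xs)" and s2: "sorted_wrt (\<ge>) (drop K xs)"
      by (auto intro: sorted_wrt_take sorted_wrt_drop)
    have "sorted_wrt (\<ge>) (map (\<lambda>x. x - 1) (take K xs))"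
      by (rule sorted_wrt_map_mono[OF s1]) auto
    then have so: "sorted_wrt (\<ge>) zs"
      using s2 t unfolding zs decL_def by (fastforce simp: sorted_wrt_append)
    have z: "0 \<notin> set zs" using t p unfolding zs decL_def is_partition_def
      by (auto dest: in_set_dropD)
    have "sum_list (map (\<lambda>x. x - 1) (take K xs)) + K = sum_list (take K xs)"
    proof -
      have t1: "\<forall>x\<in>set (take K xs). 1 \<le> x" using t by force
      have "length (take K xs) = K" using l by simp
      then show ?thesis using sum_map_pred[OF t1] by simp
    qed
    then have "sum_list zs + K = n" using p sum_take_drop[of K xs] unfolding zs decL_def is_partition_def
      by simp
    then have "is_partition (n - K) zs" using so z by (simp add: is_partition_def)
    moreover have "drop K zs = drop K xs" "K \<le> length zs" using l by (simp_all add: zs decL_def)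
    ultimately show "zs \<in> ?B" using r by (simp add: pset_def)
  qed
  show "incL K ` ?B \<subseteq> ?A"
  proof
    fix zs assume "zs \<in> incL K ` ?B"
    then obtain ys where zs: "zs = incL K ys" and "ys \<in> ?B" by blast
    then have p: "is_partition (n - K) ys" and l: "K \<le> length ys" and r: "R (drop K ys)"
      by (auto simp: pset_def)
    have s: "sorted_wrt (\<ge>) ys" using p by (simp add: is_partition_def)
    have s1: "sorted_wrt (\<ge>) (take K ys)" and s2: "sorted_wrt (\<ge>) (drop K ys)"
      and cr: "\<forall>x\<in>set (take K ys). \<forall>y\<in>set (drop K ys). y \<le> x"
      using s sorted_wrt_append[of "(\<ge>)" "take K ys" "drop K ys"] by auto
    have "sorted_wrt (\<ge>) (map Suc (take K ys))"
      by (rule sorted_wrt_map_mono[OF s1]) auto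
    then have so: "sorted_wrt (\<ge>) zs"
      using s2 cr unfolding zs incL_def by (force simp: sorted_wrt_append)
    have z: "0 \<notin> set zs" using p unfolding zs incL_def is_partition_def
      by (auto dest: in_set_dropD)
    have "sum_list zs = n" using p sum_take_drop[of K ys] l assms unfolding zs incL_def is_partition_def
      by (simp add: sum_map_Suc)
    then have "is_partition n zs" using so z by (simp add: is_partition_def)
    moreover have "drop K zs = drop K ys" "take K zs = map Suc (take K ys)" "K \<le> length zs"
      using l by (simp_all add: zs incL_def)
    moreover have "\<forall>x\<in>set (take K ys). 1 \<le> x" using part_pos[OF p] by (auto simp: Suc_le_eq dest: in_set_takeD)
    ultimately show "zs \<in> ?A" using r cr by (force simp: pset_def)
  qed
qed

lemma len_empty: "n < K \<Longrightarrow> pset n (\<lambda>xs. K \<le> length xs \<and> S xs) = {}"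
  by (rule empty_shift[where a=K]) (use part_len le_trans in blast)+

lemma del_bij:
  assumes "l \<le> n"
  shows "card (pset n (\<lambda>xs. Suc k < length xs \<and> xs ! Suc k = l \<and> xs ! k = l))
       = card (pset (n - l) (\<lambda>ys. k < length ys \<and> ys ! k = l))"
proof (rule bij_betw_same_card[of "\<lambda>xs. take k xs @ drop (Suc k) xs"],
       rule bij_betw_byWitness[where f'="\<lambda>ys. take k ys @ l # drop k ys"])
  let ?A = "pset n (\<lambda>xs. Suc k < length xs \<and> xs ! Suc k = l \<and> xs ! k = l)"
  let ?B = "pset (n - l) (\<lambda>ys. k < length ys \<and> ys ! k = l)"
  show "\<forall>a\<in>?A. take k (take k a @ drop (Suc k) a) @ l # drop k (take k a @ drop (Suc k) a) = a"
  proof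
    fix xs assume "xs \<in> ?A"
    then have l: "Suc k < length xs" and e: "xs ! k = l" by (auto simp: pset_def)
    then show "take k (take k xs @ drop (Suc k) xs) @ l # drop k (take k xs @ drop (Suc k) xs) = xs"
      using id_take_nth_drop[of k xs] by simp
  qed
  show "\<forall>a\<in>?B. take k (take k a @ l # drop k a) @ drop (Suc k) (take k a @ l # drop k a) = a"
    by (auto simp: pset_def)
  show "(\<lambda>xs. take k xs @ drop (Suc k) xs) ` ?A \<subseteq> ?B"
  proof
    fix zs assume "zs \<in> (\<lambda>xs. take k xs @ drop (Suc k) xs) ` ?A"
    then obtain xs where zs: "zs = take k xs @ drop (Suc k) xs" and "xs \<in> ?A" by blast
    then have p: "is_partition n xs" and l: "Suc k < length xs" and e1: "xs ! Suc k = l" and e: "xs ! k = l"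
      by (auto simp: pset_def)
    have xs: "xs = take k xs @ l # drop (Suc k) xs" using id_take_nth_drop[of k xs] l e by simp
    have s: "sorted_wrt (\<ge>) (take k xs @ l # drop (Suc k) xs)" using p xs by (simp add: is_partition_def)
    then have so: "sorted_wrt (\<ge>) zs" unfolding zs by (auto simp: sorted_wrt_append)
    have z: "0 \<notin> set zs" using p unfolding zs is_partition_def
      by (auto dest: in_set_dropD in_set_takeD)
    have "sum_list xs = sum_list (take k xs) + l + sum_list (drop (Suc k) xs)"
      by (subst xs) simp
    then have "sum_list zs = n - l" using p unfolding zs is_partition_def by simp
    then have "is_partition (n - l) zs" using so z by (simp add: is_partition_def)
    moreover have "k < length zs" "zs ! k = l" using l e1 by (simp_all add: zs nth_append)
    ultimately show "zs \<in> ?B" by (simp add: pset_def)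
  qed
  show "(\<lambda>ys. take k ys @ l # drop k ys) ` ?B \<subseteq> ?A"
  proof
    fix zs assume "zs \<in> (\<lambda>ys. take k ys @ l # drop k ys) ` ?B"
    then obtain ys where zs: "zs = take k ys @ l # drop k ys" and "ys \<in> ?B" by blast
    then have p: "is_partition (n - l) ys" and l: "k < length ys" and e: "ys ! k = l"
      by (auto simp: pset_def)
    have d: "drop k ys = l # drop (Suc k) ys" using Cons_nth_drop_Suc[OF l] e by simp
    have s: "sorted_wrt (\<ge>) (take k ys @ l # drop (Suc k) ys)"
      using p id_take_nth_drop[OF l] e by (simp add: is_partition_def)
    then have so: "sorted_wrt (\<ge>) zs" unfolding zs d by (auto simp: sorted_wrt_append)
    have lp: "0 < l" using part_nth_pos[OF p l] e by simp
    have z: "0 \<notin> set zs" using p lp unfolding zs is_partition_def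
      by (auto dest: in_set_dropD in_set_takeD)
    have "sum_list ys = sum_list (take k ys) + sum_list (drop k ys)" by (simp add: sum_take_drop)
    then have "sum_list zs = n" using p assms unfolding zs is_partition_def by simp
    then have "is_partition n zs" using so z by (simp add: is_partition_def)
    moreover have "Suc k < length zs" "zs ! Suc k = l" "zs ! k = l" using l d by (simp_all add: zs nth_append)
    ultimately show "zs \<in> ?A" by (simp add: pset_def)
  qed
qed


definition gEX :: "nat \<Rightarrow> rat fps" where "gEX k = gf (\<lambda>xs. length xs = k)"

lemma gEX_0: "gEX 0 = 1"
proof -
  have "pset n (\<lambda>xs. length xs = 0) = (if n = 0 then {[]} else {})" for n
  proof -
    have "pset n (\<lambda>xs. length xs = 0) = {xs. is_partition n xs \<and> xs = []}" by (simp add: pset_def)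
    also have "\<dots> = (if n = 0 then {[]} else {})" by (auto simp: is_partition_def)
    finally show ?thesis .
  qed
  then show ?thesis unfolding gEX_def gf_def by (intro fps_ext) simp
qed

lemma gEX_Suc: "gEX (Suc k) = XX ^ Suc k * gEX (Suc k) + XX * gEX k"
proof -
  have "gEX (Suc k) = gf (\<lambda>xs. length xs = Suc k \<and> (\<forall>x\<in>set xs. 2 \<le> x))
      + gf (\<lambda>xs. length xs = Suc k \<and> \<not> (\<forall>x\<in>set xs. 2 \<le> x))"
    unfolding gEX_def by (rule gf_split)
  also have "gf (\<lambda>xs. length xs = Suc k \<and> (\<forall>x\<in>set xs. 2 \<le> x))
     = gf (\<lambda>xs. Suc k \<le> length xs \<and> drop (Suc k) xs = [] \<and>
          (\<forall>x\<in>set (take (Suc k) xs). 2 \<le> x \<and> (\<forall>y\<in>set (drop (Suc k) xs). y < x)))"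
    by (rule gf_cong) auto
  also have "\<dots> = XX ^ Suc k * gf (\<lambda>ys. Suc k \<le> length ys \<and> drop (Suc k) ys = [])"
    by (rule gf_shift) (erule dec_bij[where R="\<lambda>d. d = []"], erule len_empty)
  also have "gf (\<lambda>ys. Suc k \<le> length ys \<and> drop (Suc k) ys = []) = gEX (Suc k)"
    unfolding gEX_def by (rule gf_cong) auto
  also have "gf (\<lambda>xs. length xs = Suc k \<and> \<not> (\<forall>x\<in>set xs. 2 \<le> x)) = gf (\<lambda>xs. length xs = Suc k \<and> last xs = 1)"
  proof (rule gf_cong)
    fix n xs assume p: "is_partition n xs"
    show "(length xs = Suc k \<and> \<not> (\<forall>x\<in>set xs. 2 \<le> x)) = (length xs = Suc k \<and> last xs = 1)"
    proof (cases "length xs = Suc k")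
      case True
      then have ne: "xs \<noteq> []" by auto
      have "sorted_wrt (\<ge>) (butlast xs @ [last xs])" using p ne by (simp add: is_partition_def)
      then have g1: "\<forall>x\<in>set (butlast xs). last xs \<le> x" by (simp add: sorted_wrt_append)
      have "set xs = set (butlast xs @ [last xs])" by (simp only: append_butlast_last_id[OF ne])
      then have ge: "\<forall>x\<in>set xs. last xs \<le> x" using g1 by simp
      have lp: "0 < last xs" using part_pos[OF p] ne by simp
      show ?thesis
      proof
        assume "length xs = Suc k \<and> \<not> (\<forall>x\<in>set xs. 2 \<le> x)"
        then obtain x where "x \<in> set xs" "x < 2" by auto
        then show "length xs = Suc k \<and> last xs = 1" using ge lp True by force
      next
        assume "length xs = Suc k \<and> last xs = 1"
        moreover have "last xs \<in> set xs" by (rule last_in_set[OF ne])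
        ultimately show "length xs = Suc k \<and> \<not> (\<forall>x\<in>set xs. 2 \<le> x)" by fastforce
      qed
    next
      case False then show ?thesis by simp
    qed
  qed
  also have "\<dots> = XX ^ 1 * gEX k"
    unfolding gEX_def
  proof (rule gf_shift)
    show "\<And>n. 1 \<le> n \<Longrightarrow> card (pset n (\<lambda>xs. length xs = Suc k \<and> last xs = 1)) = card (pset (n - 1) (\<lambda>xs. length xs = k))"
      by (rule card_butlast)
    show "\<And>n. n < 1 \<Longrightarrow> pset n (\<lambda>xs. length xs = Suc k \<and> last xs = 1) = {}"
      by (rule empty_shift[where a=1]) (use part_len in fastforce)+
  qed
  finally show ?thesis by simp
qed

lemma gEX_tpoch: "gEX k * tpoch k = XX ^ k"
proof (induction k)
  case 0 then show ?case by (simp add: gEX_0)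
next
  case (Suc k)
  have h: "gEX (Suc k) * (1 - XX ^ Suc k) = XX * gEX k"
    using gEX_Suc[of k] by (simp add: algebra_simps)
  have "gEX (Suc k) * tpoch (Suc k) = (gEX (Suc k) * (1 - XX ^ Suc k)) * tpoch k"
    by (simp add: tpoch_Suc ac_simps)
  also have "\<dots> = XX * (gEX k * tpoch k)" by (simp only: h mult.assoc)
  finally show ?case using Suc.IH by simp
qed

definition gQ :: "nat \<Rightarrow> rat fps" where "gQ k = gf (\<lambda>xs. length xs \<le> k)"

lemma gQ_tpoch: "gQ k * tpoch k = 1"
proof (induction k)
  case 0
  have "gQ 0 = gEX 0" unfolding gQ_def gEX_def by (rule gf_cong) auto
  then show ?case by (simp add: gEX_0)
next
  case (Suc k)
  have "gQ (Suc k) = gf (\<lambda>xs. length xs \<le> Suc k \<and> length xs \<le> k) + gf (\<lambda>xs. length xs \<le> Suc k \<and> \<not> length xs \<le> k)"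
    unfolding gQ_def by (rule gf_split)
  also have "gf (\<lambda>xs. length xs \<le> Suc k \<and> length xs \<le> k) = gQ k"
    unfolding gQ_def by (rule gf_cong) auto
  also have "gf (\<lambda>xs. length xs \<le> Suc k \<and> \<not> length xs \<le> k) = gEX (Suc k)"
    unfolding gEX_def by (rule gf_cong) auto
  finally have h: "gQ (Suc k) = gQ k + gEX (Suc k)" .
  have "gQ (Suc k) * tpoch (Suc k) = (gQ k * tpoch k) * (1 - XX ^ Suc k) + gEX (Suc k) * tpoch (Suc k)"
    by (simp add: h tpoch_Suc algebra_simps)
  also have "\<dots> = 1" using Suc.IH gEX_tpoch[of "Suc k"] by simp
  finally show ?case .
qed

definition gE :: "nat \<Rightarrow> nat \<Rightarrow> rat fps" where "gE k l = gf (\<lambda>xs. k < length xs \<and> xs ! k = l)"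

lemma gE_0: "0 < l \<Longrightarrow> gE 0 l = XX ^ l * Pg l"
proof -
  assume l: "0 < l"
  have "gE 0 l = gf (\<lambda>xs. xs \<noteq> [] \<and> hd xs = l)"
    unfolding gE_def by (rule gf_cong) (auto simp: hd_conv_nth)
  also have "\<dots> = XX ^ l * Pg l"
    unfolding Pg_def using l by (intro gf_shift) (simp_all add: card_cons cons_empty)
  finally show ?thesis .
qed

lemma gE_Suc: "0 < l \<Longrightarrow> gE (Suc k) l = XX ^ Suc k * gE (Suc k) l + XX ^ l * gE k l"
proof -
  assume l0: "0 < l"
  have "gE (Suc k) l = gf (\<lambda>xs. (Suc k < length xs \<and> xs ! Suc k = l) \<and> l < xs ! k)
      + gf (\<lambda>xs. (Suc k < length xs \<and> xs ! Suc k = l) \<and> \<not> l < xs ! k)"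
    unfolding gE_def by (rule gf_split[of "\<lambda>xs. Suc k < length xs \<and> xs ! Suc k = l" "\<lambda>xs. l < xs ! k"])
  also have "gf (\<lambda>xs. (Suc k < length xs \<and> xs ! Suc k = l) \<and> l < xs ! k)
     = gf (\<lambda>xs. Suc k \<le> length xs \<and> (drop (Suc k) xs \<noteq> [] \<and> hd (drop (Suc k) xs) = l) \<and>
          (\<forall>x\<in>set (take (Suc k) xs). 2 \<le> x \<and> (\<forall>y\<in>set (drop (Suc k) xs). y < x)))"
  proof (rule gf_cong)
    fix n xs assume p: "is_partition n xs"
    show "((Suc k < length xs \<and> xs ! Suc k = l) \<and> l < xs ! k) =
      (Suc k \<le> length xs \<and> (drop (Suc k) xs \<noteq> [] \<and> hd (drop (Suc k) xs) = l) \<and>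
          (\<forall>x\<in>set (take (Suc k) xs). 2 \<le> x \<and> (\<forall>y\<in>set (drop (Suc k) xs). y < x)))"
    proof
      assume a: "(Suc k < length xs \<and> xs ! Suc k = l) \<and> l < xs ! k"
      have "\<forall>x\<in>set (take (Suc k) xs). 2 \<le> x \<and> (\<forall>y\<in>set (drop (Suc k) xs). y < x)"
      proof (intro ballI conjI)
        fix x assume x: "x \<in> set (take (Suc k) xs)"
        have "xs ! k \<le> x" using take_ge[OF p x] a by simp
        then show "2 \<le> x" using a l0 by simp
        fix y assume "y \<in> set (drop (Suc k) xs)"
        then have "y \<le> xs ! Suc k" using drop_le[OF p] a by blast
        then show "y < x" using a \<open>xs ! k \<le> x\<close> by simp
      qed
      then show "Suc k \<le> length xs \<and> (drop (Suc k) xs \<noteq> [] \<and> hd (drop (Suc k) xs) = l) \<and>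
          (\<forall>x\<in>set (take (Suc k) xs). 2 \<le> x \<and> (\<forall>y\<in>set (drop (Suc k) xs). y < x))"
        using a by (simp add: hd_drop_conv_nth)
    next
      assume a: "Suc k \<le> length xs \<and> (drop (Suc k) xs \<noteq> [] \<and> hd (drop (Suc k) xs) = l) \<and>
          (\<forall>x\<in>set (take (Suc k) xs). 2 \<le> x \<and> (\<forall>y\<in>set (drop (Suc k) xs). y < x))"
      then have len: "Suc k < length xs" by auto
      have e: "xs ! Suc k = l" using a len by (simp add: hd_drop_conv_nth)
      have m1: "xs ! k \<in> set (take (Suc k) xs)"
      proof -
        have "take (Suc k) xs ! k \<in> set (take (Suc k) xs)" using len by (intro nth_mem) simp
        then show ?thesis by simp
      qed
      have m2: "xs ! Suc k \<in> set (drop (Suc k) xs)"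
      proof -
        have "drop (Suc k) xs ! 0 \<in> set (drop (Suc k) xs)" using len by (intro nth_mem) simp
        then show ?thesis using len by simp
      qed
      have b: "\<forall>x\<in>set (take (Suc k) xs). \<forall>y\<in>set (drop (Suc k) xs). y < x" using a by simp
      have "xs ! Suc k < xs ! k" using bspec[OF bspec[OF b m1] m2] .
      then have "l < xs ! k" using e by simp
      then show "(Suc k < length xs \<and> xs ! Suc k = l) \<and> l < xs ! k" using len e by simp
    qed
  qed
  also have "\<dots> = XX ^ Suc k * gf (\<lambda>ys. Suc k \<le> length ys \<and> (drop (Suc k) ys \<noteq> [] \<and> hd (drop (Suc k) ys) = l))"
    by (rule gf_shift) (erule dec_bij[where R="\<lambda>d. d \<noteq> [] \<and> hd d = l"], erule len_empty)
  also have "gf (\<lambda>ys. Suc k \<le> length ys \<and> (drop (Suc k) ys \<noteq> [] \<and> hd (drop (Suc k) ys) = l)) = gE (Suc k) l"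
    unfolding gE_def by (rule gf_cong) (auto simp: hd_drop_conv_nth)
  also have "gf (\<lambda>xs. (Suc k < length xs \<and> xs ! Suc k = l) \<and> \<not> l < xs ! k)
      = gf (\<lambda>xs. Suc k < length xs \<and> xs ! Suc k = l \<and> xs ! k = l)"
  proof (rule gf_cong)
    fix n xs assume p: "is_partition n xs"
    show "((Suc k < length xs \<and> xs ! Suc k = l) \<and> \<not> l < xs ! k) = (Suc k < length xs \<and> xs ! Suc k = l \<and> xs ! k = l)"
      using part_nth_mono[OF p, of k "Suc k"] by auto
  qed
  also have "\<dots> = XX ^ l * gE k l"
    unfolding gE_def
  proof (rule gf_shift)
    show "\<And>n. l \<le> n \<Longrightarrow> card (pset n (\<lambda>xs. Suc k < length xs \<and> xs ! Suc k = l \<and> xs ! k = l)) =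
         card (pset (n - l) (\<lambda>ys. k < length ys \<and> ys ! k = l))"
      by (rule del_bij)
    show "\<And>n. n < l \<Longrightarrow> pset n (\<lambda>xs. Suc k < length xs \<and> xs ! Suc k = l \<and> xs ! k = l) = {}"
      by (rule empty_shift[where a=l]) (metis nth_mem part_elem)+
  qed
  finally show ?thesis .
qed

lemma gE_tpoch: "0 < l \<Longrightarrow> gE k l * tpoch k * tpoch l = XX ^ ((k + 1) * l)"
proof (induction k)
  case 0 then show ?case using Pg_tpoch[of l] by (simp add: gE_0 mult.assoc)
next
  case (Suc k)
  have h: "gE (Suc k) l * (1 - XX ^ Suc k) = XX ^ l * gE k l"
    using gE_Suc[OF Suc.prems, of k] by (simp add: algebra_simps)
  have "gE (Suc k) l * tpoch (Suc k) * tpoch l = (gE (Suc k) l * (1 - XX ^ Suc k)) * tpoch k * tpoch l"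
    by (simp add: tpoch_Suc ac_simps)
  also have "\<dots> = XX ^ l * (gE k l * tpoch k * tpoch l)" by (simp only: h mult.assoc)
  also have "\<dots> = XX ^ (l + (k + 1) * l)" using Suc by (simp add: power_add)
  finally show ?case by (simp add: algebra_simps)
qed

lemma G_gf: "G_hook k l = gf (\<lambda>xs. \<forall>i. k \<le> i \<and> i < length xs \<longrightarrow> xs ! i \<le> l)"
  unfolding G_hook_def gf_def pset_def hook_partitions_def by simp

lemma G_0: "G_hook k 0 = gQ k"
  unfolding G_gf gQ_def
proof (rule gf_cong)
  fix n xs assume p: "is_partition n xs"
  show "(\<forall>i. k \<le> i \<and> i < length xs \<longrightarrow> xs ! i \<le> 0) = (length xs \<le> k)"
  proof
    assume a: "\<forall>i. k \<le> i \<and> i < length xs \<longrightarrow> xs ! i \<le> 0"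
    show "length xs \<le> k"
    proof (rule ccontr)
      assume "\<not> length xs \<le> k"
      then have "k < length xs" by simp
      then show False using a part_nth_pos[OF p, of k] by simp
    qed
  qed simp
qed

lemma G_Suc: "G_hook k (Suc L) = G_hook k L + gE k (Suc L)"
proof -
  have "G_hook k (Suc L) = gf (\<lambda>xs. (\<forall>i. k \<le> i \<and> i < length xs \<longrightarrow> xs ! i \<le> Suc L) \<and> (\<forall>i. k \<le> i \<and> i < length xs \<longrightarrow> xs ! i \<le> L))
     + gf (\<lambda>xs. (\<forall>i. k \<le> i \<and> i < length xs \<longrightarrow> xs ! i \<le> Suc L) \<and> \<not> (\<forall>i. k \<le> i \<and> i < length xs \<longrightarrow> xs ! i \<le> L))"
    unfolding G_gf by (rule gf_split[of "\<lambda>xs. \<forall>i. k \<le> i \<and> i < length xs \<longrightarrow> xs ! i \<le> Suc L" "\<lambda>xs. \<forall>i. k \<le> i \<and> i < length xs \<longrightarrow> xs ! i \<le> L"])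
  also have "gf (\<lambda>xs. (\<forall>i. k \<le> i \<and> i < length xs \<longrightarrow> xs ! i \<le> Suc L) \<and> (\<forall>i. k \<le> i \<and> i < length xs \<longrightarrow> xs ! i \<le> L)) = G_hook k L"
    unfolding G_gf by (rule gf_cong) auto
  also have "gf (\<lambda>xs. (\<forall>i. k \<le> i \<and> i < length xs \<longrightarrow> xs ! i \<le> Suc L) \<and> \<not> (\<forall>i. k \<le> i \<and> i < length xs \<longrightarrow> xs ! i \<le> L)) = gE k (Suc L)"
    unfolding gE_def
  proof (rule gf_cong)
    fix n xs assume p: "is_partition n xs"
    show "((\<forall>i. k \<le> i \<and> i < length xs \<longrightarrow> xs ! i \<le> Suc L) \<and> \<not> (\<forall>i. k \<le> i \<and> i < length xs \<longrightarrow> xs ! i \<le> L))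
        = (k < length xs \<and> xs ! k = Suc L)"
    proof
      assume a: "(\<forall>i. k \<le> i \<and> i < length xs \<longrightarrow> xs ! i \<le> Suc L) \<and> \<not> (\<forall>i. k \<le> i \<and> i < length xs \<longrightarrow> xs ! i \<le> L)"
      then obtain i where i: "k \<le> i" "i < length xs" "\<not> xs ! i \<le> L" by auto
      have "xs ! i \<le> xs ! k" using part_nth_mono[OF p i(1,2)] .
      moreover have "xs ! k \<le> Suc L" using a i by auto
      ultimately show "k < length xs \<and> xs ! k = Suc L" using i by auto
    next
      assume a: "k < length xs \<and> xs ! k = Suc L"
      show "(\<forall>i. k \<le> i \<and> i < length xs \<longrightarrow> xs ! i \<le> Suc L) \<and> \<not> (\<forall>i. k \<le> i \<and> i < length xs \<longrightarrow> xs ! i \<le> L)"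
        using a part_nth_mono[OF p, of k] by force
    qed
  qed
  finally show ?thesis .
qed

lemma main_eq: "G_hook k l * tpoch (k + l) = A_hook k l"
proof (induction l)
  case 0 then show ?case by (simp add: G_0 gQ_tpoch A_0)
next
  case (Suc L)
  have t: "tpoch (k + Suc L) = tpoch (k + L) * (1 - XX ^ (k + Suc L))"
    using tpoch_Suc[of "k + L"] by simp
  have q: "qb (k + Suc L) (Suc L) * tpoch (Suc L) * tpoch k = tpoch (k + Suc L)"
    using qb_tpoch[of "Suc L" "k + Suc L"] by simp
  have "gE k (Suc L) * tpoch (k + Suc L) = qb (k + Suc L) (Suc L) * (gE k (Suc L) * tpoch k * tpoch (Suc L))"
    by (simp only: q[symmetric]) (simp add: ac_simps)
  also have "\<dots> = XX ^ (Suc L * (k + 1)) * qb (k + Suc L) (Suc L)"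
    by (simp only: gE_tpoch[of "Suc L" k, simplified]) (simp add: ac_simps)
  finally have e: "gE k (Suc L) * tpoch (k + Suc L) = XX ^ (Suc L * (k + 1)) * qb (k + Suc L) (Suc L)" .
  have "G_hook k (Suc L) * tpoch (k + Suc L) = (G_hook k L * tpoch (k + L)) * (1 - XX ^ (k + Suc L))
      + gE k (Suc L) * tpoch (k + Suc L)"
    by (simp only: G_Suc t) (simp add: algebra_simps)
  also have "\<dots> = A_hook k (Suc L)" using Suc.IH e A_rec[of k L] by (simp add: ac_simps)
  finally show ?case .
qed

lemma prod_inv: "(\<Prod>i = 1..n. inverse (1 - XX ^ i)) = inverse (tpoch n)"
proof (induction n)
  case 0 then show ?case by simp
next
  case (Suc n)
  have "(\<Prod>i = 1..Suc n. inverse (1 - XX ^ i)) = inverse (1 - XX ^ Suc n) * (\<Prod>i = 1..n. inverse (1 - XX ^ i))"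
    by (simp add: atLeastAtMostSuc_conv)
  then show ?case using Suc.IH by (simp add: tpoch_Suc fps_inverse_mult mult.commute)
qed

theorem theorem3:
  fixes k l :: nat
  shows "G_hook k l = A_hook k l * (\<Prod>i = 1..k + l. inverse (1 - fps_X ^ i))"
proof -
  have d: "fps_nth (tpoch (k + l)) 0 \<noteq> 0" by (simp add: tpoch_nth0)
  have "A_hook k l * (\<Prod>i = 1..k + l. inverse (1 - fps_X ^ i)) = G_hook k l * (tpoch (k + l) * inverse (tpoch (k + l)))"
    by (simp only: prod_inv main_eq[symmetric] mult.assoc)
  also have "\<dots> = G_hook k l" using inverse_mult_eq_1'[OF d] by simp
  finally show ?thesis by simp
qed


end
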